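(* Let $\mathcal{P}$ be a polyomino and $I_{\mathcal{P}}\subset S=\mathbb{K}[x_v\mid v\in V(\mathcal{P})]$ its polyomino ideal over a field $\mathbb{K}$. If there exists a zig-zag walk in $\mathcal{P}$, then $I_{\mathcal{P}}$ is not prime.
   Context: For $a\in\mathbb{N}^2$ the cell $[a,a+(1,1)]$ has vertices $a,a+(1,0),a+(0,1),a+(1,1)$ and four edges. A polyomino $\mathcal{P}$ is a finite nonempty set of cells such that any two cells are joined by a sequence of cells of $\mathcal{P}$, consecutive ones sharing an edge. $V(\mathcal{P})$ is the union of the vertex sets of its cells. For $a=(i,j)$, $b=(k,\ell)$ with $i<k$, $j<\ell$, the interval $[a,b]$ has diagonal corners $a,b$ and anti-diagonal corners $(i,\ell),(k,j)$; it is an inner interval of $\mathcal{P}$ if all its cells belong to $\mathcal{P}$. $I_{\mathcal{P}}$ is generated by the binomials $x_ax_b-x_cx_d$ for inner intervals $[a,b]$ with anti-diagonal corners $c,d$. A horizontal (resp. vertical) edge interval of $\mathcal{P}$ is a set of lattice points on a horizontal (resp. vertical) line, consecutive in that line, such that each pair of consecutive points forms an edge of some cell of $\mathcal{P}$. A zig-zag walk of $\mathcal{P}$ is a sequence of distinct inner intervals $I_1,\dots,I_\ell$ of $\mathcal{P}$ such that, for each $i$, $v_i,z_i$ are the diagonal (resp. anti-diagonal) corners and $u_i,v_{i+1}$ the anti-diagonal (resp. diagonal) corners of $I_i$, and: (Z1) $I_1\cap I_\ell=\{v_1\}=\{v_{\ell+1}\}$ and $I_i\cap I_{i+1}=\{v_{i+1}\}$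 for $i=1,\dots,\ell-1$; (Z2) $v_i$ and $v_{i+1}$ lie on a common edge interval of $\mathcal{P}$ for $i=1,\dots,\ell$; (Z3) for $i\ne j$ there is no inner interval of $\mathcal{P}$ containing both $z_i$ and $z_j$. *)

theory Defs
  imports "HOL-Library.Poly_Mapping" "HOL-Algebra.Ideal"
begin

type_synonym point = "nat \<times> nat"

text \<open>A cell is identified with its lower-left corner a; the cell is [a, a+(1,1)].\<close>

definition cell_vertices :: "point \<Rightarrow> point set" where
  "cell_vertices a = {a, (fst a + 1, snd a), (fst a, snd a + 1), (fst a + 1, snd a + 1)}"

definition cell_edges :: "point \<Rightarrow> point set set" where
  "cell_edges a = {{a, (fst a + 1, snd a)}, {a, (fst a, snd a + 1)},
                   {(fst a + 1, snd a), (fst a + 1, snd a + 1)},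
                   {(fst a, snd a + 1), (fst a + 1, snd a + 1)}}"

definition share_edge :: "point \<Rightarrow> point \<Rightarrow> bool" where
  "share_edge c d \<longleftrightarrow> cell_edges c \<inter> cell_edges d \<noteq> {}"

definition polyomino :: "point set \<Rightarrow> bool" where
  "polyomino P \<longleftrightarrow> finite P \<and> P \<noteq> {} \<and>
     (\<forall>c\<in>P. \<forall>d\<in>P. (c, d) \<in> {(x, y). x \<in> P \<and> y \<in> P \<and> share_edge x y}\<^sup>*)"

definition vertices :: "point set \<Rightarrow> point set" where
  "vertices P = (\<Union>c\<in>P. cell_vertices c)"

definition is_interval :: "point \<Rightarrow> point \<Rightarrow> bool" where
  "is_interval a b \<longleftrightarrow> fst a < fst b \<and> snd a < snd b"

definition interval_cells :: "point \<Rightarrow> point \<Rightarrow> point set" where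
  "interval_cells a b = {c. fst a \<le> fst c \<and> fst c < fst b \<and> snd a \<le> snd c \<and> snd c < snd b}"

definition interval_points :: "point \<Rightarrow> point \<Rightarrow> point set" where
  "interval_points a b = {p. fst a \<le> fst p \<and> fst p \<le> fst b \<and> snd a \<le> snd p \<and> snd p \<le> snd b}"

definition inner_interval :: "point set \<Rightarrow> point \<Rightarrow> point \<Rightarrow> bool" where
  "inner_interval P a b \<longleftrightarrow> is_interval a b \<and> interval_cells a b \<subseteq> P"

definition anti_diag :: "point \<Rightarrow> point \<Rightarrow> point set" where
  "anti_diag a b = {(fst a, snd b), (fst b, snd a)}"

type_synonym 'k mpoly = "(point \<Rightarrow>\<^sub>0 nat) \<Rightarrow>\<^sub>0 'k"

definition var :: "point \<Rightarrow> 'k::comm_ring_1 mpoly" where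
  "var v = Poly_Mapping.single (Poly_Mapping.single v 1) 1"

text \<open>S = K[x_v | v \<in> V]: polynomials all of whose monomials only involve variables in V.\<close>

definition poly_ring :: "point set \<Rightarrow> ('k::comm_ring_1 mpoly) ring" where
  "poly_ring V = \<lparr>carrier = {p :: 'k mpoly. \<forall>m\<in>Poly_Mapping.keys p. Poly_Mapping.keys m \<subseteq> V},
                  monoid.mult = (*), one = 1, zero = 0, add = (+)\<rparr>"

definition polyomino_ideal :: "point set \<Rightarrow> ('k::comm_ring_1 mpoly) set" where
  "polyomino_ideal P = genideal (poly_ring (vertices P))
     {var a * var b - var (fst a, snd b) * var (fst b, snd a) | a b. inner_interval P a b}"

definition is_edge_of :: "point set \<Rightarrow> point \<Rightarrow> point \<Rightarrow> bool" where
  "is_edge_of P p q \<longleftrightarrow> (\<exists>c\<in>P. {p, q} \<in> cell_edges c)"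

definition horiz_edge_interval :: "point set \<Rightarrow> point set \<Rightarrow> bool" where
  "horiz_edge_interval P E \<longleftrightarrow> (\<exists>i k j. i \<le> k \<and> E = {(x, j) | x. i \<le> x \<and> x \<le> k} \<and>
      (\<forall>x. i \<le> x \<and> x < k \<longrightarrow> is_edge_of P (x, j) (x + 1, j)))"

definition vert_edge_interval :: "point set \<Rightarrow> point set \<Rightarrow> bool" where
  "vert_edge_interval P E \<longleftrightarrow> (\<exists>i k j. i \<le> k \<and> E = {(j, y) | y. i \<le> y \<and> y \<le> k} \<and>
      (\<forall>y. i \<le> y \<and> y < k \<longrightarrow> is_edge_of P (j, y) (j, y + 1)))"

definition edge_interval :: "point set \<Rightarrow> point set \<Rightarrow> bool" where
  "edge_interval P E \<longleftrightarrow> horiz_edge_interval P E \<or> vert_edge_interval P E"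

text \<open>Zig-zag walk I_1..I_l, 0-indexed: interval I_i = [a i, b i] for i < l,
  with points v i, z i, u i (i < l) and v l = v 0 (i.e. v_{l+1} = v_1).\<close>

definition zigzag_walk :: "point set \<Rightarrow> nat \<Rightarrow> (nat \<Rightarrow> point) \<Rightarrow> (nat \<Rightarrow> point) \<Rightarrow>
    (nat \<Rightarrow> point) \<Rightarrow> (nat \<Rightarrow> point) \<Rightarrow> (nat \<Rightarrow> point) \<Rightarrow> bool" where
  "zigzag_walk P l a b v z u \<longleftrightarrow>
     l \<ge> 1 \<and>
     inj_on (\<lambda>i. (a i, b i)) {..<l} \<and>
     (\<forall>i<l. inner_interval P (a i) (b i)) \<and>
     (\<forall>i<l. ({v i, z i} = {a i, b i} \<and> {u i, v (i + 1)} = anti_diag (a i) (b i)) \<or>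
            ({v i, z i} = anti_diag (a i) (b i) \<and> {u i, v (i + 1)} = {a i, b i})) \<and>
     v l = v 0 \<and>
     interval_points (a 0) (b 0) \<inter> interval_points (a (l - 1)) (b (l - 1)) = {v 0} \<and>
     (\<forall>i. i + 1 < l \<longrightarrow> interval_points (a i) (b i) \<inter> interval_points (a (i + 1)) (b (i + 1)) = {v (i + 1)}) \<and>
     (\<forall>i<l. \<exists>E. edge_interval P E \<and> v i \<in> E \<and> v (i + 1) \<in> E) \<and>
     (\<forall>i<l. \<forall>j<l. i \<noteq> j \<longrightarrow>
        \<not> (\<exists>c d. inner_interval P c d \<and> z i \<in> interval_points c d \<and> z j \<in> interval_points c d))"

end

theory Submission
  imports Defs
begin

lemma var_mult: "(var x * var y :: 'k::comm_ring_1 mpoly) = Poly_Mapping.single (Poly_Mapping.single x 1 + Poly_Mapping.single y 1) 1"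
  by (simp add: var_def mult_single)

lemma prod_var: "(\<Prod>i<(n::nat). var (f i) :: 'k::comm_ring_1 mpoly) = Poly_Mapping.single (\<Sum>i<n. Poly_Mapping.single (f i) 1) 1"
  by (induction n) (simp_all add: var_def mult_single)

lemma var_carrier: "w \<in> V \<Longrightarrow> (var w :: 'k::comm_ring_1 mpoly) \<in> carrier (poly_ring V)"
  by (simp add: var_def poly_ring_def)

lemma carrier_simps:
  "carrier (poly_ring V) = {p. \<forall>m\<in>Poly_Mapping.keys p. Poly_Mapping.keys m \<subseteq> V}"
  "monoid.mult (poly_ring V) = (*)" "one (poly_ring V) = 1" "zero (poly_ring V) = 0" "add (poly_ring V) = (+)"
  by (simp_all add: poly_ring_def)


lemma neg_carrier: "p \<in> carrier (poly_ring V) \<Longrightarrow> (- p :: 'k::comm_ring_1 mpoly) \<in> carrier (poly_ring V)"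
  unfolding carrier_simps mem_Collect_eq keys_minus by assumption

lemma lookup_mult_zero:
  assumes "\<And>m t. m0 = m + t \<Longrightarrow> Poly_Mapping.lookup p m = 0"
    and "m0 = m + t"
  shows "Poly_Mapping.lookup ((r :: 'k::comm_ring_1 mpoly) * p) m = 0"
proof -
  have "\<And>l. (\<Sum>q. Poly_Mapping.lookup p q when m = l + q) = 0"
  proof -
    fix l
    have "\<And>q. (Poly_Mapping.lookup p q when m = l + q) = 0"
    proof -
      fix q
      show "(Poly_Mapping.lookup p q when m = l + q) = 0"
      proof (cases "m = l + q")
        case True
        then have "m0 = q + (l + t)" using assms(2) by (simp add: algebra_simps)
        then show ?thesis using assms(1) by simp
      qed simp
    qed
    then show "(\<Sum>q. Poly_Mapping.lookup p q when m = l + q) = 0" by simp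
  qed
  then show ?thesis by (simp add: lookup_mult)
qed

lemma diff_carrier: "p \<in> carrier (poly_ring V) \<Longrightarrow> q \<in> carrier (poly_ring V) \<Longrightarrow>
   (p - q :: 'k::comm_ring_1 mpoly) \<in> carrier (poly_ring V)"
  unfolding carrier_simps mem_Collect_eq using keys_diff[of p q] by blast

lemma corners_vertices:
  assumes "inner_interval P a b"
  shows "a \<in> vertices P" "b \<in> vertices P" "(fst a, snd b) \<in> vertices P" "(fst b, snd a) \<in> vertices P"
proof -
  obtain i j k l where ab: "a = (i, j)" "b = (k, l)" by (cases a, cases b) auto
  have lt: "i < k" "j < l" using assms ab by (auto simp: inner_interval_def is_interval_def)
  have cells: "interval_cells a b \<subseteq> P" using assms by (simp add: inner_interval_def)
  have c1: "(i, j) \<in> P" using cells lt ab by (auto simp: interval_cells_def)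
  have c2: "(k - 1, l - 1) \<in> P" using cells lt ab by (auto simp: interval_cells_def)
  have c3: "(i, l - 1) \<in> P" using cells lt ab by (auto simp: interval_cells_def)
  have c4: "(k - 1, j) \<in> P" using cells lt ab by (auto simp: interval_cells_def)
  have "(i, j) \<in> cell_vertices (i, j)" by (simp add: cell_vertices_def)
  then show "a \<in> vertices P" using c1 ab unfolding vertices_def by blast
  have "(k, l) \<in> cell_vertices (k - 1, l - 1)" using lt by (simp add: cell_vertices_def)
  then show "b \<in> vertices P" using c2 ab unfolding vertices_def by blast
  have "(i, l) \<in> cell_vertices (i, l - 1)" using lt by (simp add: cell_vertices_def)
  then show "(fst a, snd b) \<in> vertices P" using c3 ab unfolding vertices_def by auto
  have "(k, j) \<in> cell_vertices (k - 1, j)" using lt by (simp add: cell_vertices_def)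
  then show "(fst b, snd a) \<in> vertices P" using c4 ab unfolding vertices_def by auto
qed

lemma coeff_zero:
  fixes m0 :: "point \<Rightarrow>\<^sub>0 nat"
  assumes R: "ring (poly_ring (vertices P) :: 'k::comm_ring_1 mpoly ring)"
    and H1: "\<And>a b t. inner_interval P a b \<Longrightarrow> m0 \<noteq> Poly_Mapping.single a 1 + Poly_Mapping.single b 1 + t"
    and H2: "\<And>a b t. inner_interval P a b \<Longrightarrow>
        m0 \<noteq> Poly_Mapping.single (fst a, snd b) 1 + Poly_Mapping.single (fst b, snd a) 1 + t"
    and p: "p \<in> (polyomino_ideal P :: 'k mpoly set)"
  shows "Poly_Mapping.lookup p m0 = 0"
proof -
  let ?R = "poly_ring (vertices P) :: 'k mpoly ring"
  interpret ring ?R by (rule R)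
  define J where "J = {p \<in> carrier ?R. \<forall>m t. m0 = m + t \<longrightarrow> Poly_Mapping.lookup p m = 0}"
  have lmul: "x * q \<in> J" if "q \<in> J" "x \<in> carrier ?R" for x q
  proof -
    have "x * q \<in> carrier ?R" using m_closed[of x q] that by (simp add: J_def carrier_simps(2))
    moreover have "\<forall>m t. m0 = m + t \<longrightarrow> Poly_Mapping.lookup (x * q) m = 0"
      using that(1) unfolding J_def by (blast intro: lookup_mult_zero)
    ultimately show ?thesis by (simp add: J_def)
  qed
  have idJ: "ideal J ?R"
  proof (rule idealI[OF R])
    show "subgroup J (add_monoid ?R)"
    proof (rule add.subgroupI)
      show "J \<subseteq> carrier ?R" by (auto simp: J_def)
      have "\<zero>\<^bsub>?R\<^esub> \<in> J" by (simp add: J_def carrier_simps)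
      then show "J \<noteq> {}" by blast
      fix q assume q: "q \<in> J"
      then have qc: "q \<in> carrier ?R" by (simp add: J_def)
      have "\<ominus>\<^bsub>?R\<^esub> q = (\<ominus>\<^bsub>?R\<^esub> \<one>\<^bsub>?R\<^esub>) \<otimes>\<^bsub>?R\<^esub> q"
        using l_minus[of "\<one>\<^bsub>?R\<^esub>" q] qc by simp
      also have "\<dots> = (\<ominus>\<^bsub>?R\<^esub> \<one>\<^bsub>?R\<^esub>) * q" by (simp add: carrier_simps)
      finally show "\<ominus>\<^bsub>?R\<^esub> q \<in> J" using lmul[OF q, of "\<ominus>\<^bsub>?R\<^esub> \<one>\<^bsub>?R\<^esub>"] by simp
    next
      fix q r assume "q \<in> J" "r \<in> J"
      then show "q \<oplus>\<^bsub>?R\<^esub> r \<in> J"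
        using a_closed[of q r] by (auto simp: J_def carrier_simps lookup_add)
    qed
  next
    fix q x assume "q \<in> J" "x \<in> carrier ?R"
    then show "x \<otimes>\<^bsub>?R\<^esub> q \<in> J" using lmul by (simp add: carrier_simps)
  next
    fix q x assume "q \<in> J" "x \<in> carrier ?R"
    then show "q \<otimes>\<^bsub>?R\<^esub> x \<in> J" using lmul by (simp add: carrier_simps mult.commute)
  qed
  have gens: "{var a * var b - var (fst a, snd b) * var (fst b, snd a) | a b. inner_interval P a b} \<subseteq> J"
  proof
    fix g assume "g \<in> {var a * var b - var (fst a, snd b) * var (fst b, snd a) :: 'k mpoly | a b. inner_interval P a b}"
    then obtain a b where ab: "inner_interval P a b" and g: "g = var a * var b - var (fst a, snd b) * var (fst b, snd a)"
      by blast
    note cv = corners_vertices[OF ab]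
    have "g \<in> carrier ?R" unfolding g
      by (intro diff_carrier) (metis cv var_carrier carrier_simps(2) m_closed)+
    moreover have "Poly_Mapping.lookup g m = 0" if "m0 = m + t" for m t
      using H1[OF ab, of t] H2[OF ab, of t] that
      by (auto simp: g var_mult lookup_minus lookup_single when_def)
    ultimately show "g \<in> J" unfolding J_def by blast
  qed
  have "polyomino_ideal P \<subseteq> J"
    unfolding polyomino_ideal_def by (rule genideal_minimal[OF idJ gens])
  then show ?thesis using p by (auto simp: J_def)
qed

lemma lookup_ge1: "m0 = Poly_Mapping.single x (1::nat) + Y \<Longrightarrow> Poly_Mapping.lookup m0 x \<ge> 1"
  by (simp add: lookup_add)

lemma sum_single_lookup:
  assumes "Poly_Mapping.lookup (\<Sum>i<(n::nat). Poly_Mapping.single (f i) (1::nat)) x \<ge> 1"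
  shows "\<exists>i<n. f i = x"
proof (rule ccontr)
  assume "\<not> ?thesis"
  then have "\<forall>i\<in>{..<n}. Poly_Mapping.lookup (Poly_Mapping.single (f i) (1::nat)) x = 0"
    by (auto simp: lookup_single when_def)
  then have "Poly_Mapping.lookup (\<Sum>i<(n::nat). Poly_Mapping.single (f i) (1::nat)) x = 0"
    by (simp add: lookup_sum)
  with assms show False by simp
qed

lemma sum_single_member:
  assumes "j < (n::nat)"
  shows "Poly_Mapping.lookup (\<Sum>i<n. Poly_Mapping.single (f i) (1::nat)) (f j) \<ge> 1"
proof -
  have "(1::nat) = Poly_Mapping.lookup (Poly_Mapping.single (f j) (1::nat)) (f j)" by simp
  also have "\<dots> \<le> (\<Sum>i<n. Poly_Mapping.lookup (Poly_Mapping.single (f i) (1::nat)) (f j))"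
    by (rule member_le_sum[where f = "\<lambda>i. Poly_Mapping.lookup (Poly_Mapping.single (f i) (1::nat)) (f j)"]) (use assms in auto)
  finally show ?thesis by (simp add: lookup_sum)
qed

lemma corners_ip:
  assumes "is_interval a b"
  shows "a \<in> interval_points a b" "b \<in> interval_points a b"
    "(fst a, snd b) \<in> interval_points a b" "(fst b, snd a) \<in> interval_points a b"
  using assms by (auto simp: interval_points_def is_interval_def)

lemma anti_diag_disj:
  assumes "is_interval a b"
  shows "a \<notin> anti_diag a b" "b \<notin> anti_diag a b"
  using assms by (auto simp: anti_diag_def is_interval_def prod_eq_iff)

theorem corollary3p6:
  fixes P :: "point set" and l :: nat and a b v z u :: "nat \<Rightarrow> point"
  assumes "polyomino P"
    and "zigzag_walk P l a b v z u"
  shows "\<not> primeideal (polyomino_ideal P :: ('k::field) mpoly set) (poly_ring (vertices P))"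
proof
  let ?R = "poly_ring (vertices P) :: 'k mpoly ring"
  let ?I = "polyomino_ideal P :: 'k mpoly set"
  let ?c = "\<lambda>i. (fst (a i), snd (b i))"
  let ?d = "\<lambda>i. (fst (b i), snd (a i))"
  assume pr: "primeideal ?I ?R"
  interpret primeideal ?I ?R by (rule pr)
  have R: "ring ?R" by (rule ring_axioms)
  have zz: "zigzag_walk P l a b v z u" by fact
  have l1: "l \<ge> 1" using zz by (simp add: zigzag_walk_def)
  have inn: "\<And>i. i < l \<Longrightarrow> inner_interval P (a i) (b i)" using zz by (simp add: zigzag_walk_def)
  have cor: "\<And>i. i < l \<Longrightarrow> ({v i, z i} = {a i, b i} \<and> {u i, v (i + 1)} = {?c i, ?d i}) \<or>
            ({v i, z i} = {?c i, ?d i} \<and> {u i, v (i + 1)} = {a i, b i})"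
    using zz by (simp add: zigzag_walk_def anti_diag_def)
  have vl: "v l = v 0" using zz by (simp add: zigzag_walk_def)
  have Z3: "\<And>i j c d. i < l \<Longrightarrow> j < l \<Longrightarrow> i \<noteq> j \<Longrightarrow> inner_interval P c d \<Longrightarrow>
      z i \<in> interval_points c d \<Longrightarrow> z j \<in> interval_points c d \<Longrightarrow> False"
    using zz unfolding zigzag_walk_def by blast
  have isint: "\<And>i. i < l \<Longrightarrow> is_interval (a i) (b i)" using inn by (simp add: inner_interval_def)
  have pts: "\<And>i. i < l \<Longrightarrow> {v i, z i, u i, v (Suc i)} \<subseteq> {a i, b i, ?c i, ?d i}"
  proof -
    fix i assume il: "i < l"
    have mem: "\<And>p q S. {p, q} = S \<Longrightarrow> p \<in> S \<and> q \<in> S" by blast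
    from cor[OF il] show "{v i, z i, u i, v (Suc i)} \<subseteq> {a i, b i, ?c i, ?d i}"
    proof
      assume h: "{v i, z i} = {a i, b i} \<and> {u i, v (i + 1)} = {?c i, ?d i}"
      have "v i \<in> {a i, b i} \<and> z i \<in> {a i, b i}"
        using mem[OF conjunct1[OF h]] .
      moreover have "u i \<in> {?c i, ?d i} \<and> v (i + 1) \<in> {?c i, ?d i}"
        using mem[OF conjunct2[OF h]] .
      ultimately show ?thesis unfolding Suc_eq_plus1 by blast
    next
      assume h: "{v i, z i} = {?c i, ?d i} \<and> {u i, v (i + 1)} = {a i, b i}"
      have "v i \<in> {?c i, ?d i} \<and> z i \<in> {?c i, ?d i}"
        using mem[OF conjunct1[OF h]] .
      moreover have "u i \<in> {a i, b i} \<and> v (i + 1) \<in> {a i, b i}"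
        using mem[OF conjunct2[OF h]] .
      ultimately show ?thesis unfolding Suc_eq_plus1 by blast
    qed
  qed
  have ptsV: "\<And>i. i < l \<Longrightarrow> {v i, z i, u i, v (Suc i)} \<subseteq> vertices P"
  proof -
    fix i assume il: "i < l"
    have "{a i, b i, ?c i, ?d i} \<subseteq> vertices P" using corners_vertices[OF inn[OF il]] by simp
    then show "{v i, z i, u i, v (Suc i)} \<subseteq> vertices P" using pts[OF il] by (rule subset_trans[rotated])
  qed
  have Iadd: "\<And>x y. x \<in> ?I \<Longrightarrow> y \<in> ?I \<Longrightarrow> x + y \<in> ?I"
    using additive_subgroup.a_closed[OF is_additive_subgroup] by (simp add: carrier_simps(2-5))
  have Imul: "\<And>x y. x \<in> carrier ?R \<Longrightarrow> y \<in> ?I \<Longrightarrow> x * y \<in> ?I"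
    using I_l_closed by (simp add: carrier_simps(2-5))
  have mcl: "\<And>x y. x \<in> carrier ?R \<Longrightarrow> y \<in> carrier ?R \<Longrightarrow> x * y \<in> carrier ?R"
    using m_closed by (simp add: carrier_simps(2-5))
  have onec: "(1::'k mpoly) \<in> carrier ?R" using one_closed by (simp add: carrier_simps(2-5))
  have varc: "\<And>i. i < l \<Longrightarrow> var (v i) \<in> carrier ?R \<and> var (z i) \<in> carrier ?R \<and>
       var (u i) \<in> carrier ?R \<and> var (v (Suc i)) \<in> carrier ?R"
    using ptsV var_carrier unfolding insert_subset by blast
  have prodc: "\<And>f n. (\<And>i. i < n \<Longrightarrow> var (f i) \<in> carrier ?R) \<Longrightarrow> (\<Prod>i<(n::nat). var (f i)) \<in> carrier ?R"
  proof -
    fix f and n :: nat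
    show "(\<And>i. i < n \<Longrightarrow> var (f i) \<in> carrier ?R) \<Longrightarrow> (\<Prod>i<n. var (f i)) \<in> carrier ?R"
      by (induction n) (simp_all add: onec mcl)
  qed
  have gen: "\<And>x y. inner_interval P x y \<Longrightarrow> var x * var y - var (fst x, snd y) * var (fst y, snd x) \<in> ?I"
    unfolding polyomino_ideal_def genideal_def by blast
  have fI: "var (v i) * var (z i) - var (u i) * var (v (Suc i)) \<in> ?I" if il: "i < l" for i
  proof -
    have g: "var (a i) * var (b i) - var (?c i) * var (?d i) \<in> ?I" using gen[OF inn[OF il]] by simp
    have e1: "var (v i) * var (z i) = var (a i) * var (b i)" if "{v i, z i} = {a i, b i}"
      using that by (auto simp: doubleton_eq_iff mult.commute)
    have e2: "var (u i) * var (v (Suc i)) = var (?c i) * var (?d i)" if "{u i, v (i + 1)} = {?c i, ?d i}"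
      using that by (auto simp: doubleton_eq_iff mult.commute)
    have e3: "var (v i) * var (z i) = var (?c i) * var (?d i)" if "{v i, z i} = {?c i, ?d i}"
      using that by (auto simp: doubleton_eq_iff mult.commute)
    have e4: "var (u i) * var (v (Suc i)) = var (a i) * var (b i)" if "{u i, v (i + 1)} = {a i, b i}"
      using that by (auto simp: doubleton_eq_iff mult.commute)
    have m1: "(- 1 :: 'k mpoly) \<in> carrier ?R" using neg_carrier[OF onec] .
    show ?thesis
    proof (cases "{v i, z i} = {a i, b i} \<and> {u i, v (i + 1)} = {?c i, ?d i}")
      case True
      show ?thesis unfolding e1[OF conjunct1[OF True]] e2[OF conjunct2[OF True]] by (rule g)
    next
      case False
      then have h: "{v i, z i} = {?c i, ?d i} \<and> {u i, v (i + 1)} = {a i, b i}" using cor[OF il] by blast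
      have eqf: "var (v i) * var (z i) - var (u i) * var (v (Suc i)) =
          (- 1) * (var (a i) * var (b i) - var (?c i) * var (?d i))"
        by (simp only: e3[OF conjunct1[OF h]] e4[OF conjunct2[OF h]]) simp
      show ?thesis unfolding eqf by (rule Imul[OF m1 g])
    qed
  qed
  define A where "A n = (\<Prod>i<n. var (v i) :: 'k mpoly)" for n
  define Zp where "Zp n = (\<Prod>i<n. var (z i) :: 'k mpoly)" for n
  define Up where "Up n = (\<Prod>i<n. var (u i) :: 'k mpoly)" for n
  define W where "W n = (\<Prod>i<n. var (v (Suc i)) :: 'k mpoly)" for n
  have Uc: "Up n \<in> carrier ?R" if "n \<le> l" for n
    unfolding Up_def using that varc by (intro prodc) auto
  have Wc: "W n \<in> carrier ?R" if "n \<le> l" for n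
    unfolding W_def using that varc by (intro prodc) auto
  have Zc: "Zp n \<in> carrier ?R" if "n \<le> l" for n
    unfolding Zp_def using that varc by (intro prodc) auto
  have Ac: "A n \<in> carrier ?R" if "n \<le> l" for n
    unfolding A_def using that varc by (intro prodc) auto
  have tele: "n \<le> l \<Longrightarrow> A n * Zp n - Up n * W n \<in> ?I" for n
  proof (induction n)
    case 0
    have "(0::'k mpoly) \<in> ?I" using additive_subgroup.zero_closed[OF is_additive_subgroup] by (simp add: carrier_simps(2-5))
    then show ?case by (simp add: A_def Zp_def Up_def W_def)
  next
    case (Suc n)
    let ?al = "var (v n) * var (z n) :: 'k mpoly"
    let ?be = "var (u n) * var (v (Suc n)) :: 'k mpoly"
    have nl: "n < l" using Suc by simp
    have eq: "A (Suc n) * Zp (Suc n) - Up (Suc n) * W (Suc n) =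
        ?al * (A n * Zp n - Up n * W n) + (Up n * W n) * (?al - ?be)"
      by (simp add: A_def Zp_def Up_def W_def algebra_simps)
    have "?al \<in> carrier ?R" using varc[OF nl] mcl by blast
    moreover have "Up n * W n \<in> carrier ?R" using Uc Wc mcl nl by simp
    ultimately show ?case unfolding eq using Suc fI[OF nl] Imul Iadd by simp
  qed
  have WA: "W l = A l"
  proof -
    obtain k where k: "l = Suc k" using l1 by (cases l) auto
    have "W l = (\<Prod>i<k. var (v (Suc i))) * var (v l)" by (simp add: W_def k)
    also have "\<dots> = (\<Prod>i<k. var (v (Suc i))) * var (v 0)" using vl by simp
    also have "\<dots> = A l" unfolding A_def k prod.lessThan_Suc_shift by (rule mult.commute)
    finally show ?thesis .
  qed
  have key: "A l \<otimes>\<^bsub>?R\<^esub> (Zp l - Up l) \<in> ?I"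
    using tele[of l] WA by (simp add: carrier_simps(2-5) algebra_simps)
  have ZUc: "Zp l - Up l \<in> carrier ?R" by (rule diff_carrier) (simp_all add: Zc Uc)
  have "A l \<in> ?I \<or> Zp l - Up l \<in> ?I" using I_prime[OF Ac[of l] ZUc key] by simp
  moreover
  have one_notin: "(1 :: 'k mpoly) \<notin> ?I"
  proof
    assume "(1 :: 'k mpoly) \<in> ?I"
    moreover have "Poly_Mapping.lookup (1 :: 'k mpoly) 0 \<noteq> 0" by simp
    moreover have "Poly_Mapping.lookup (1 :: 'k mpoly) 0 = 0"
    proof (rule coeff_zero[OF R _ _ calculation(1)])
      fix x y and t :: "point \<Rightarrow>\<^sub>0 nat" assume "inner_interval P x y"
      show "(0::point \<Rightarrow>\<^sub>0 nat) \<noteq> Poly_Mapping.single x 1 + Poly_Mapping.single y 1 + t"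
        using lookup_ge1[of 0 x "Poly_Mapping.single y (1::nat) + t"] by (auto simp: add.assoc)
      show "(0::point \<Rightarrow>\<^sub>0 nat) \<noteq> Poly_Mapping.single (fst x, snd y) 1 + Poly_Mapping.single (fst y, snd x) 1 + t"
        using lookup_ge1[of 0 "(fst x, snd y)" "Poly_Mapping.single (fst y, snd x) (1::nat) + t"] by (auto simp: add.assoc)
    qed
    ultimately show False by simp
  qed
  have var_notin: "var w \<notin> ?I" for w
  proof
    assume "var w \<in> ?I"
    moreover have "Poly_Mapping.lookup (var w :: 'k mpoly) (Poly_Mapping.single w 1) \<noteq> 0" by (simp add: var_def)
    moreover have "Poly_Mapping.lookup (var w :: 'k mpoly) (Poly_Mapping.single w 1) = 0"
    proof (rule coeff_zero[OF R _ _ calculation(1)])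
      fix x y and t :: "point \<Rightarrow>\<^sub>0 nat" assume xy: "inner_interval P x y"
      then have ne: "fst x < fst y" by (simp add: inner_interval_def is_interval_def)
      show "Poly_Mapping.single w 1 \<noteq> Poly_Mapping.single x 1 + Poly_Mapping.single y 1 + t"
      proof
        assume h: "Poly_Mapping.single w 1 = Poly_Mapping.single x 1 + Poly_Mapping.single y 1 + t"
        have "Poly_Mapping.lookup (Poly_Mapping.single w (1::nat)) x \<ge> 1"
          using lookup_ge1[of _ x "Poly_Mapping.single y (1::nat) + t"] h by (simp add: add.assoc)
        moreover have "Poly_Mapping.lookup (Poly_Mapping.single w (1::nat)) y \<ge> 1"
          using lookup_ge1[of _ y "Poly_Mapping.single x (1::nat) + t"] h by (simp add: add_ac)
        ultimately show False using ne by (auto simp: lookup_single when_def split: if_splits)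
      qed
      show "Poly_Mapping.single w 1 \<noteq> Poly_Mapping.single (fst x, snd y) 1 + Poly_Mapping.single (fst y, snd x) 1 + t"
      proof
        assume h: "Poly_Mapping.single w 1 = Poly_Mapping.single (fst x, snd y) 1 + Poly_Mapping.single (fst y, snd x) 1 + t"
        have "Poly_Mapping.lookup (Poly_Mapping.single w (1::nat)) (fst x, snd y) \<ge> 1"
          using lookup_ge1[of _ "(fst x, snd y)" "Poly_Mapping.single (fst y, snd x) (1::nat) + t"] h by (simp add: add.assoc)
        moreover have "Poly_Mapping.lookup (Poly_Mapping.single w (1::nat)) (fst y, snd x) \<ge> 1"
          using lookup_ge1[of _ "(fst y, snd x)" "Poly_Mapping.single (fst x, snd y) (1::nat) + t"] h by (simp add: add_ac)
        ultimately show False using ne by (auto simp: lookup_single when_def split: if_splits)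
      qed
    qed
    ultimately show False by simp
  qed
  have Anotin: "n \<le> l \<Longrightarrow> A n \<notin> ?I" for n
  proof (induction n)
    case 0
    then show ?case using one_notin by (simp add: A_def)
  next
    case (Suc n)
    have nl: "n < l" using Suc by simp
    have "A (Suc n) = A n \<otimes>\<^bsub>?R\<^esub> var (v n)" by (simp add: A_def carrier_simps(2-5))
    then show ?case using I_prime[OF Ac[of n] conjunct1[OF varc[OF nl]]] Suc var_notin nl by auto
  qed
  moreover
  have "Zp l - Up l \<notin> ?I"
  proof
    assume ZU: "Zp l - Up l \<in> ?I"
    define m0 where "m0 = (\<Sum>i<l. Poly_Mapping.single (z i) (1::nat))"
    have zin: "\<exists>i<l. z i = x" if "Poly_Mapping.lookup m0 x \<ge> 1" for x
      by (rule sum_single_lookup[where n=l and f=z and x=x, OF that[unfolded m0_def]])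
    have Zl: "Zp l = Poly_Mapping.single m0 1" by (simp add: Zp_def m0_def prod_var)
    have Ul: "Up l = Poly_Mapping.single (\<Sum>i<l. Poly_Mapping.single (u i) (1::nat)) 1" by (simp add: Up_def prod_var)
    have ne: "(\<Sum>i<l. Poly_Mapping.single (u i) (1::nat)) \<noteq> m0"
    proof
      assume h: "(\<Sum>i<l. Poly_Mapping.single (u i) (1::nat)) = m0"
      have "Poly_Mapping.lookup m0 (u 0) \<ge> 1" using sum_single_member[of 0 l u] l1 h by simp
      then obtain j where j: "j < l" "z j = u 0" using zin[of "u 0"] by blast
      have l0: "0 < l" using l1 by simp
      have "{a 0, b 0, ?c 0, ?d 0} \<subseteq> interval_points (a 0) (b 0)"
        using corners_ip[OF isint[OF l0]] by simp
      then have ip0: "{v 0, z 0, u 0, v (Suc 0)} \<subseteq> interval_points (a 0) (b 0)"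
        using pts[OF l0] by (rule subset_trans[rotated])
      then have z0ip: "z 0 \<in> interval_points (a 0) (b 0)" and u0ip: "u 0 \<in> interval_points (a 0) (b 0)"
        by simp_all
      show False
      proof (cases "j = 0")
        case True
        then have "z 0 = u 0" using j by simp
        moreover have "z 0 \<noteq> u 0"
        proof
          assume zu: "z 0 = u 0"
          have mem: "\<And>p q S. {p, q} = S \<Longrightarrow> p \<in> S \<and> q \<in> S" by blast
          have ad: "anti_diag (a 0) (b 0) = {?c 0, ?d 0}" by (simp add: anti_diag_def)
          note dj = anti_diag_disj[OF isint[OF l0], unfolded ad]
          from cor[OF l0] show False
          proof
            assume h: "{v 0, z 0} = {a 0, b 0} \<and> {u 0, v (0 + 1)} = {?c 0, ?d 0}"
            have "z 0 \<in> {a 0, b 0}" using mem[OF conjunct1[OF h]] by blast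
            moreover have "u 0 \<in> {?c 0, ?d 0}" using mem[OF conjunct2[OF h]] by blast
            ultimately show False using zu dj by auto
          next
            assume h: "{v 0, z 0} = {?c 0, ?d 0} \<and> {u 0, v (0 + 1)} = {a 0, b 0}"
            have "z 0 \<in> {?c 0, ?d 0}" using mem[OF conjunct1[OF h]] by blast
            moreover have "u 0 \<in> {a 0, b 0}" using mem[OF conjunct2[OF h]] by blast
            ultimately show False using zu dj by auto
          qed
        qed
        ultimately show False by simp
      next
        case False
        then have "0 \<noteq> j" by simp
        from Z3[OF l0 j(1) this inn[OF l0] z0ip] show False using u0ip j(2) by simp
      qed
    qed
    have "Poly_Mapping.lookup (Zp l - Up l) m0 = 1" using ne by (simp add: Zl Ul lookup_minus lookup_single)
    moreover have "Poly_Mapping.lookup (Zp l - Up l) m0 = 0"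
    proof (rule coeff_zero[OF R _ _ ZU])
      fix x y and t :: "point \<Rightarrow>\<^sub>0 nat" assume xy: "inner_interval P x y"
      then have ii: "is_interval x y" by (simp add: inner_interval_def)
      then have ne: "fst x < fst y" by (simp add: is_interval_def)
      have two: False if pq: "p \<noteq> q" "p \<in> interval_points x y" "q \<in> interval_points x y"
          "Poly_Mapping.lookup m0 p \<ge> 1" "Poly_Mapping.lookup m0 q \<ge> 1" for p q
      proof -
        obtain i where i: "i < l" "z i = p" using zin pq(4) by blast
        obtain j where j: "j < l" "z j = q" using zin pq(5) by blast
        have "i \<noteq> j" using i j pq(1) by auto
        from Z3[OF i(1) j(1) this xy] show False using i(2) j(2) pq(2,3) by simp
      qed
      show "m0 \<noteq> Poly_Mapping.single x 1 + Poly_Mapping.single y 1 + t"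
      proof
        assume h: "m0 = Poly_Mapping.single x 1 + Poly_Mapping.single y 1 + t"
        have "Poly_Mapping.lookup m0 x \<ge> 1"
          using lookup_ge1[of _ x "Poly_Mapping.single y (1::nat) + t"] h by (simp add: add.assoc)
        moreover have "Poly_Mapping.lookup m0 y \<ge> 1"
          using lookup_ge1[of _ y "Poly_Mapping.single x (1::nat) + t"] h by (simp add: add_ac)
        moreover have "x \<noteq> y" using ne by auto
        ultimately show False using two[OF _ corners_ip(1)[OF ii] corners_ip(2)[OF ii]] by blast
      qed
      show "m0 \<noteq> Poly_Mapping.single (fst x, snd y) 1 + Poly_Mapping.single (fst y, snd x) 1 + t"
      proof
        assume h: "m0 = Poly_Mapping.single (fst x, snd y) 1 + Poly_Mapping.single (fst y, snd x) 1 + t"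
        have "Poly_Mapping.lookup m0 (fst x, snd y) \<ge> 1"
          using lookup_ge1[of _ "(fst x, snd y)" "Poly_Mapping.single (fst y, snd x) (1::nat) + t"] h by (simp add: add.assoc)
        moreover have "Poly_Mapping.lookup m0 (fst y, snd x) \<ge> 1"
          using lookup_ge1[of _ "(fst y, snd x)" "Poly_Mapping.single (fst x, snd y) (1::nat) + t"] h by (simp add: add_ac)
        moreover have "(fst x, snd y) \<noteq> (fst y, snd x)" using ne by auto
        ultimately show False using two[OF _ corners_ip(3)[OF ii] corners_ip(4)[OF ii]] by blast
      qed
    qed
    ultimately show False by simp
  qed
  ultimately show False using Anotin[of l] by simp
qed

end
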